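(* Let $n\in\{2,6,10,\dots\}$ and consider $f_{n+4}$ on $\{0,1\}^{n+4}$. (a) At any vertex with $x_{n+1}=x_{n+2}=1$, changing $x_{n+1}$ or $x_{n+2}$ to $0$ strictly decreases $f_{n+4}$; hence an increasing path that enters the subcube $\{x_{n+1}=x_{n+2}=1\}$ never leaves it. (b) At any vertex with $x_{n+3}=x_{n+4}=1$, changing $x_{n+3}$ or $x_{n+4}$ to $0$ strictly decreases $f_{n+4}$; hence an increasing path that enters the subcube $\{x_{n+3}=x_{n+4}=1\}$ never leaves it.
   Context: For $n\in\{2,6,10,\dots\}$ define polynomials $f_n$ in variables $x_1,\dots,x_n$ (evaluated on $\{0,1\}^n$) recursively. Set $f_2(x_1,x_2):=x_1+x_2$. For $n\in\{2,6,10,\dots\}$, write $\mathbf{x}=(x_1,\dots,x_n)$, $S:=\sum_{i=1}^n x_i$, let $M_n:=\max_{\{0,1\}^n} f_n-\min_{\{0,1\}^n} f_n+1$, and define $f_{n+4}(\mathbf{x},x_{n+1},x_{n+2},x_{n+3},x_{n+4}) := f_n(\mathbf{x}) - M_n n^2 x_{n+1} + M_n(n+1) S x_{n+1} - x_{n+2} - 2M_n n S x_{n+2} + 2M_n n(n+2) x_{n+1}x_{n+2} - 4 S x_{n+3} + 2x_{n+1}x_{n+3} + 2x_{n+2}x_{n+3} - 3x_{n+3} + (M_n(n-1)+4) S x_{n+4} + 6M_n n^2 x_{n+3}x_{n+4} - 5M_n n^2 x_{n+4}$. An increasing path is a sequence of vertices of the hypercube, consecutive ones differing in exactly one coordinate,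 along which the function value strictly increases. *)

theory Defs
  imports Main
begin

text \<open>Vertices of the hypercube {0,1}^n: functions x with x i \<in> {0,1} for 1 \<le> i \<le> n
  and x i = 0 outside {1..n} (so the cube is a finite set).\<close>
definition cube :: "nat \<Rightarrow> (nat \<Rightarrow> int) set" where
  "cube n = {x. (\<forall>i\<in>{1..n}. x i \<in> {0,1}) \<and> (\<forall>i. i \<notin> {1..n} \<longrightarrow> x i = 0)}"

text \<open>fpoly k is the polynomial f_n with n = 4k+2.\<close>
primrec fpoly :: "nat \<Rightarrow> (nat \<Rightarrow> int) \<Rightarrow> int" where
  "fpoly 0 = (\<lambda>x. x 1 + x 2)"
| "fpoly (Suc k) =
     (let g = fpoly k; n = 4 * k + 2;
          M = Max (g ` cube n) - Min (g ` cube n) + 1;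
          ni = int n
      in (\<lambda>x. let S = (\<Sum>i=1..n. x i) in
            g x - M * ni^2 * x (n+1) + M * (ni+1) * S * x (n+1)
            - x (n+2) - 2 * M * ni * S * x (n+2) + 2 * M * ni * (ni+2) * x (n+1) * x (n+2)
            - 4 * S * x (n+3) + 2 * x (n+1) * x (n+3) + 2 * x (n+2) * x (n+3) - 3 * x (n+3)
            + (M * (ni - 1) + 4) * S * x (n+4) + 6 * M * ni^2 * x (n+3) * x (n+4)
            - 5 * M * ni^2 * x (n+4)))"

definition f :: "nat \<Rightarrow> (nat \<Rightarrow> int) \<Rightarrow> int" where
  "f n = fpoly ((n - 2) div 4)"

definition adjacent :: "nat \<Rightarrow> (nat \<Rightarrow> int) \<Rightarrow> (nat \<Rightarrow> int) \<Rightarrow> bool" where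
  "adjacent n x y \<longleftrightarrow> card {i\<in>{1..n}. x i \<noteq> y i} = 1"

definition increasing_path :: "nat \<Rightarrow> ((nat \<Rightarrow> int) \<Rightarrow> int) \<Rightarrow> (nat \<Rightarrow> int) list \<Rightarrow> bool" where
  "increasing_path n g ps \<longleftrightarrow> set ps \<subseteq> cube n \<and>
     (\<forall>i. Suc i < length ps \<longrightarrow> adjacent n (ps ! i) (ps ! Suc i) \<and> g (ps ! i) < g (ps ! Suc i))"

end

theory Submission
  imports Defs
begin

lemma fpoly_local: "(\<forall>i\<in>{1..4*k+2}. x i = y i) \<Longrightarrow> fpoly k x = fpoly k y"
proof (induction k arbitrary: x y)
  case 0 then show ?case by simp
next
  case (Suc k)
  have h: "\<forall>i\<in>{1..4*k+2}. x i = y i" using Suc.prems by auto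
  have IH: "fpoly k x = fpoly k y" using Suc.IH[OF h] .
  have s: "(\<Sum>i=1..4*k+2. x i) = (\<Sum>i=1..4*k+2. y i)" using h by (intro sum.cong) auto
  have e1: "x (4*k+2+1) = y (4*k+2+1)" using Suc.prems by auto
  have e2: "x (4*k+2+2) = y (4*k+2+2)" using Suc.prems by auto
  have e3: "x (4*k+2+3) = y (4*k+2+3)" using Suc.prems by auto
  have e4: "x (4*k+2+4) = y (4*k+2+4)" using Suc.prems by auto
  show ?case by (simp only: fpoly.simps Let_def IH s e1 e2 e3 e4)
qed

lemma cube_finite: "finite (cube n)"
proof -
  have "cube n \<subseteq> (\<lambda>A i. if i \<in> A then 1 else 0) ` Pow {1..n}"
  proof
    fix x assume x: "x \<in> cube n"
    have "x i = (if i \<in> {i\<in>{1..n}. x i = 1} then 1 else 0)" for i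
    proof (cases "i \<in> {1..n}")
      case True then have "x i \<in> {0,1}" using x unfolding cube_def by blast
      then show ?thesis using True by auto
    next
      case False then have "x i = 0" using x unfolding cube_def by blast
      then show ?thesis using False by simp
    qed
    then have "x = (\<lambda>i. if i \<in> {i\<in>{1..n}. x i = 1} then 1 else 0)" by (intro ext)
    then show "x \<in> (\<lambda>A i. if i \<in> A then 1 else 0) ` Pow {1..n}" by blast
  qed
  then show ?thesis by (rule finite_subset) auto
qed

lemma cube_ne: "(\<lambda>_. 0) \<in> cube n" unfolding cube_def by auto

lemma M_pos: "Max (g ` cube n) - Min (g ` cube n) + 1 \<ge> (1::int)"
proof -
  have "Min (g ` cube n) \<le> g (\<lambda>_. 0)" using cube_finite cube_ne by (intro Min_le) auto
  moreover have "g (\<lambda>_. 0) \<le> Max (g ` cube n)" using cube_finite cube_ne by (intro Max_ge) auto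
  ultimately show ?thesis by simp
qed

lemma S_bounds:
  assumes "x \<in> cube m" "n \<le> m"
  shows "0 \<le> (\<Sum>i=1..n. x i)" "(\<Sum>i=1..n. x i) \<le> int n"
proof -
  have b: "0 \<le> x i \<and> x i \<le> 1" if "i \<in> {1..n}" for i
  proof -
    have "x i \<in> {0,1}" using assms that unfolding cube_def by auto
    then show ?thesis by auto
  qed
  show "0 \<le> (\<Sum>i=1..n. x i)" using b by (intro sum_nonneg) blast
  have "(\<Sum>i=1..n. x i) \<le> (\<Sum>i=1..n. 1)" using b by (intro sum_mono) blast
  then show "(\<Sum>i=1..n. x i) \<le> int n" by simp
qed

lemma adj_eq:
  assumes "x \<in> cube m" "y \<in> cube m" "adjacent m x y" "i \<in> {1..m}" "x i \<noteq> y i"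
  shows "y = x(i := 1 - x i)"
proof -
  have "card {j\<in>{1..m}. x j \<noteq> y j} = 1" using assms(3) unfolding adjacent_def .
  then obtain a where a: "{j\<in>{1..m}. x j \<noteq> y j} = {a}" by (auto simp: card_Suc_eq)
  have ia: "i = a" using a assms(4,5) by auto
  show ?thesis
  proof
    fix j
    show "y j = (x(i := 1 - x i)) j"
    proof (cases "j = i")
      case True
      have "x i \<in> {0,1}" "y i \<in> {0,1}" using assms(1,2,4) unfolding cube_def by auto
      then show ?thesis using True assms(5) by auto
    next
      case False
      then have "j \<notin> {j\<in>{1..m}. x j \<noteq> y j}" using a ia by auto
      then show ?thesis using False assms(1,2) unfolding cube_def by auto
    qed
  qed
qed

lemma f_expand:
  assumes "n = 4*k+2"
  shows "f (n+4) x = (let g = fpoly k; M = Max (g ` cube n) - Min (g ` cube n) + 1; ni = int n;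
           S = (\<Sum>i=1..n. x i) in
            g x - M * ni^2 * x (n+1) + M * (ni+1) * S * x (n+1)
            - x (n+2) - 2 * M * ni * S * x (n+2) + 2 * M * ni * (ni+2) * x (n+1) * x (n+2)
            - 4 * S * x (n+3) + 2 * x (n+1) * x (n+3) + 2 * x (n+2) * x (n+3) - 3 * x (n+3)
            + (M * (ni - 1) + 4) * S * x (n+4) + 6 * M * ni^2 * x (n+3) * x (n+4)
            - 5 * M * ni^2 * x (n+4))"
proof -
  have "(n + 4 - 2) div 4 = Suc k" using assms by simp
  then have "f (n+4) = fpoly (Suc k)" unfolding f_def by simp
  then show ?thesis using assms by (simp only: fpoly.simps Let_def)
qed

lemma step_lemma:
  assumes "n = 4*k+2"
  shows "\<And>x. x \<in> cube (n+4) \<Longrightarrow> x (n+1) = 1 \<Longrightarrow> x (n+2) = 1 \<Longrightarrow>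
        f (n+4) (x(n+1 := 0)) < f (n+4) x \<and> f (n+4) (x(n+2 := 0)) < f (n+4) x"
    and "\<And>x. x \<in> cube (n+4) \<Longrightarrow> x (n+3) = 1 \<Longrightarrow> x (n+4) = 1 \<Longrightarrow>
        f (n+4) (x(n+3 := 0)) < f (n+4) x \<and> f (n+4) (x(n+4 := 0)) < f (n+4) x"
proof -
  define g where "g = fpoly k"
  define M where "M = Max (g ` cube n) - Min (g ` cube n) + 1"
  define ni where "ni = int n"
  define E where "E = (\<lambda>(G::int) (S::int) (a::int) (b::int) (c::int) (d::int). G - M * ni^2 * a + M * (ni+1) * S * a
            - b - 2 * M * ni * S * b + 2 * M * ni * (ni+2) * a * b
            - 4 * S * c + 2 * a * c + 2 * b * c - 3 * c
            + (M * (ni - 1) + 4) * S * d + 6 * M * ni^2 * c * d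
            - 5 * M * ni^2 * d)"
  have M1: "M \<ge> 1" unfolding M_def by (rule M_pos)
  have ni2: "ni \<ge> 2" unfolding ni_def using assms by simp
  define Sf where "Sf = (\<lambda>x::nat\<Rightarrow>int. \<Sum>i=1..n. x i)"
  have Sx: "Sf (x(j := v)) = Sf x" if "j > n" for x j v
    unfolding Sf_def using that by (intro sum.cong) auto
  have gx: "g (x(j := v)) = g x" if "j > n" for x j v
    unfolding g_def using that assms by (intro fpoly_local) auto
  have F: "f (n+4) x = E (g x) (Sf x) (x (n+1)) (x (n+2)) (x (n+3)) (x (n+4))" for x
    using f_expand[OF assms, of x] unfolding g_def M_def ni_def E_def Sf_def by (simp only: Let_def)
  have bit: "x j \<in> {0,1}" if "x \<in> cube (n+4)" "j \<in> {1..n+4}" for x j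
    using that unfolding cube_def by auto
  have Q: "M*ni*ni \<ge> ni*ni" using M1 ni2 by simp
  have Q2: "ni*ni \<ge> 2*ni" using ni2 by (intro mult_right_mono) auto
  have R: "M*ni \<ge> 1*2" using M1 ni2 by (intro mult_mono) auto
  {
    fix x assume x: "x \<in> cube (n+4)" and a: "x (n+1) = 1" and b: "x (n+2) = 1"
    define S where "S = Sf x"
    have S0: "0 \<le> S" and Sn: "S \<le> ni" using S_bounds[OF x, of n] unfolding S_def Sf_def ni_def by auto
    have c: "x (n+3) \<in> {0,1}" using bit[OF x] by auto
    then have c: "0 \<le> x (n+3)" by auto
    have e1: "f (n+4) (x(n+1 := 0)) = E (g x) S 0 1 (x (n+3)) (x (n+4))"
      using F[of "x(n+1 := 0)"] Sx[of "n+1" x 0] gx[of "n+1" x 0] b unfolding S_def by simp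
    have e2: "f (n+4) (x(n+2 := 0)) = E (g x) S 1 0 (x (n+3)) (x (n+4))"
      using F[of "x(n+2 := 0)"] Sx[of "n+2" x 0] gx[of "n+2" x 0] a unfolding S_def by simp
    have e0: "f (n+4) x = E (g x) S 1 1 (x (n+3)) (x (n+4))"
      using F[of x] a b unfolding S_def by simp
    have d1: "E G S 1 1 c' d' - E G S 0 1 c' d' = M*ni*ni + 4*(M*ni) + M*(ni+1)*S + 2*c'" for G c' d'
      unfolding E_def by (simp add: algebra_simps power2_eq_square)
    have d2: "E G S 1 1 c' d' - E G S 1 0 c' d' = -1 - 2*(M*ni*S) + 2*(M*ni*ni) + 4*(M*ni) + 2*c'" for G c' d'
      unfolding E_def by (simp add: algebra_simps power2_eq_square)
    have V: "M*ni*S \<le> M*ni*ni" using Sn M1 ni2 by (intro mult_left_mono) auto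
    have U: "0 \<le> M*(ni+1)*S" using M1 ni2 S0 by simp
    have "f (n+4) (x(n+1 := 0)) < f (n+4) x \<and> f (n+4) (x(n+2 := 0)) < f (n+4) x"
      unfolding e0 e1 e2 using d1[of "g x" "x (n+3)" "x (n+4)"] d2[of "g x" "x (n+3)" "x (n+4)"] c V U R Q zero_le_square[of ni]
      by (intro conjI; linarith)
  }
  then show "\<And>x. x \<in> cube (n+4) \<Longrightarrow> x (n+1) = 1 \<Longrightarrow> x (n+2) = 1 \<Longrightarrow>
        f (n+4) (x(n+1 := 0)) < f (n+4) x \<and> f (n+4) (x(n+2 := 0)) < f (n+4) x" by blast
  {
    fix x assume x: "x \<in> cube (n+4)" and c: "x (n+3) = 1" and d: "x (n+4) = 1"
    define S where "S = Sf x"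
    have S0: "0 \<le> S" and Sn: "S \<le> ni" using S_bounds[OF x, of n] unfolding S_def Sf_def ni_def by auto
    have ab: "x (n+1) \<in> {0,1}" "x (n+2) \<in> {0,1}" using bit[OF x] by auto
    then have ab: "0 \<le> x (n+1)" "0 \<le> x (n+2)" by auto
    have e1: "f (n+4) (x(n+3 := 0)) = E (g x) S (x (n+1)) (x (n+2)) 0 1"
      using F[of "x(n+3 := 0)"] Sx[of "n+3" x 0] gx[of "n+3" x 0] d unfolding S_def by simp
    have e2: "f (n+4) (x(n+4 := 0)) = E (g x) S (x (n+1)) (x (n+2)) 1 0"
      using F[of "x(n+4 := 0)"] Sx[of "n+4" x 0] gx[of "n+4" x 0] c unfolding S_def by simp
    have e0: "f (n+4) x = E (g x) S (x (n+1)) (x (n+2)) 1 1"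
      using F[of x] c d unfolding S_def by simp
    have d1: "E G S a' b' 1 1 - E G S a' b' 0 1 = -4*S + 2*a' + 2*b' - 3 + 6*(M*ni*ni)" for G a' b'
      unfolding E_def by (simp add: algebra_simps power2_eq_square)
    have d2: "E G S a' b' 1 1 - E G S a' b' 1 0 = (M*(ni-1)+4)*S + M*ni*ni" for G a' b'
      unfolding E_def by (simp add: algebra_simps power2_eq_square)
    have W: "0 \<le> (M*(ni-1)+4)*S" using M1 ni2 S0 by simp
    have "f (n+4) (x(n+3 := 0)) < f (n+4) x \<and> f (n+4) (x(n+4 := 0)) < f (n+4) x"
      unfolding e0 e1 e2 using d1[of "g x" "x (n+1)" "x (n+2)"] d2[of "g x" "x (n+1)" "x (n+2)"] ab W Q Q2 Sn ni2
      by (intro conjI; linarith)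
  }
  then show "\<And>x. x \<in> cube (n+4) \<Longrightarrow> x (n+3) = 1 \<Longrightarrow> x (n+4) = 1 \<Longrightarrow>
        f (n+4) (x(n+3 := 0)) < f (n+4) x \<and> f (n+4) (x(n+4 := 0)) < f (n+4) x" by blast
qed

lemma path_lemma:
  assumes P: "\<And>x. x \<in> cube m \<Longrightarrow> x p = 1 \<Longrightarrow> x q = 1 \<Longrightarrow>
        F (x(p := 0)) < F x \<and> F (x(q := 0)) < F x"
    and pq: "p \<in> {1..m}" "q \<in> {1..m}"
    and ip: "increasing_path m F ps"
  shows "i \<le> j \<Longrightarrow> j < length ps \<Longrightarrow> (ps!i) p = 1 \<Longrightarrow> (ps!i) q = 1 \<Longrightarrow>
               (ps!j) p = 1 \<and> (ps!j) q = 1"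
proof (induction j)
  case 0 then show ?case by simp
next
  case (Suc j)
  show ?case
  proof (cases "i = Suc j")
    case True then show ?thesis using Suc.prems by simp
  next
    case False
    then have IH: "(ps!j) p = 1 \<and> (ps!j) q = 1" using Suc by simp
    have inc: "adjacent m (ps!j) (ps!Suc j)" "F (ps!j) < F (ps!Suc j)"
      using ip Suc.prems unfolding increasing_path_def by auto
    have sub: "set ps \<subseteq> cube m" using ip unfolding increasing_path_def by blast
    have cx: "ps!j \<in> cube m" "ps!Suc j \<in> cube m" using sub Suc.prems nth_mem[of j ps] nth_mem[of "Suc j" ps]
      by auto
    have lt: "F ((ps!j)(p := 0)) < F (ps!j)" "F ((ps!j)(q := 0)) < F (ps!j)" using P[OF cx(1)] IH by auto
    show ?thesis
    proof (rule ccontr)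
      assume "\<not> ?thesis"
      then consider "(ps!j) p \<noteq> (ps!Suc j) p" | "(ps!j) q \<noteq> (ps!Suc j) q" using IH by auto
      then show False
      proof cases
        case 1
        then have "ps!Suc j = (ps!j)(p := 0)" using adj_eq[OF cx inc(1) pq(1)] IH by simp
        then show False using lt inc by simp
      next
        case 2
        then have "ps!Suc j = (ps!j)(q := 0)" using adj_eq[OF cx inc(1) pq(2)] IH by simp
        then show False using lt inc by simp
      qed
    qed
  qed
qed

theorem mainTheorem8:
  fixes n :: nat
  assumes "n mod 4 = 2"
  shows
   "(\<forall>x\<in>cube (n+4). x (n+1) = 1 \<and> x (n+2) = 1 \<longrightarrow>
        f (n+4) (x(n+1 := 0)) < f (n+4) x \<and> f (n+4) (x(n+2 := 0)) < f (n+4) x)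
  \<and> (\<forall>ps. increasing_path (n+4) (f (n+4)) ps \<longrightarrow>
        (\<forall>i j. i \<le> j \<and> j < length ps \<and> (ps!i) (n+1) = 1 \<and> (ps!i) (n+2) = 1 \<longrightarrow>
               (ps!j) (n+1) = 1 \<and> (ps!j) (n+2) = 1))
  \<and> (\<forall>x\<in>cube (n+4). x (n+3) = 1 \<and> x (n+4) = 1 \<longrightarrow>
        f (n+4) (x(n+3 := 0)) < f (n+4) x \<and> f (n+4) (x(n+4 := 0)) < f (n+4) x)
  \<and> (\<forall>ps. increasing_path (n+4) (f (n+4)) ps \<longrightarrow>
        (\<forall>i j. i \<le> j \<and> j < length ps \<and> (ps!i) (n+3) = 1 \<and> (ps!i) (n+4) = 1 \<longrightarrow>
               (ps!j) (n+3) = 1 \<and> (ps!j) (n+4) = 1))"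
proof -
  define k where "k = n div 4"
  have k: "n = 4*k+2" unfolding k_def using div_mult_mod_eq[of n 4] assms by linarith
  note s = step_lemma[OF k]
  have A: "\<forall>ps. increasing_path (n+4) (f (n+4)) ps \<longrightarrow>
        (\<forall>i j. i \<le> j \<and> j < length ps \<and> (ps!i) (n+1) = 1 \<and> (ps!i) (n+2) = 1 \<longrightarrow>
               (ps!j) (n+1) = 1 \<and> (ps!j) (n+2) = 1)"
  proof (intro allI impI)
    fix ps i j assume ip: "increasing_path (n+4) (f (n+4)) ps"
      and h: "i \<le> j \<and> j < length ps \<and> (ps!i) (n+1) = 1 \<and> (ps!i) (n+2) = 1"
    have pq: "n+1 \<in> {1..n+4}" "n+2 \<in> {1..n+4}" by auto
    show "(ps!j) (n+1) = 1 \<and> (ps!j) (n+2) = 1"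
      using path_lemma[where m="n+4" and p="n+1" and q="n+2", OF s(1) pq ip] h by blast
  qed
  have B: "\<forall>ps. increasing_path (n+4) (f (n+4)) ps \<longrightarrow>
        (\<forall>i j. i \<le> j \<and> j < length ps \<and> (ps!i) (n+3) = 1 \<and> (ps!i) (n+4) = 1 \<longrightarrow>
               (ps!j) (n+3) = 1 \<and> (ps!j) (n+4) = 1)"
  proof (intro allI impI)
    fix ps i j assume ip: "increasing_path (n+4) (f (n+4)) ps"
      and h: "i \<le> j \<and> j < length ps \<and> (ps!i) (n+3) = 1 \<and> (ps!i) (n+4) = 1"
    have pq: "n+3 \<in> {1..n+4}" "n+4 \<in> {1..n+4}" by auto
    show "(ps!j) (n+3) = 1 \<and> (ps!j) (n+4) = 1"
      using path_lemma[where m="n+4" and p="n+3" and q="n+4", OF s(2) pq ip] h by blast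
  qed
  have C: "\<forall>x\<in>cube (n+4). x (n+1) = 1 \<and> x (n+2) = 1 \<longrightarrow>
        f (n+4) (x(n+1 := 0)) < f (n+4) x \<and> f (n+4) (x(n+2 := 0)) < f (n+4) x"
    using s(1) by blast
  have D: "\<forall>x\<in>cube (n+4). x (n+3) = 1 \<and> x (n+4) = 1 \<longrightarrow>
        f (n+4) (x(n+3 := 0)) < f (n+4) x \<and> f (n+4) (x(n+4 := 0)) < f (n+4) x"
    using s(2) by blast
  show ?thesis using A B C D by (intro conjI)
qed

end
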